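(* Let $(V,E)$ be a finite graph and $p\in(0,1)$. Assume that there exists a vertex $\bar x\in V$ which belongs to at least four edges, and that there exists a spin configuration $\bar\sigma\in\{-1,1\}^V$ with $\delta_{\bar\sigma}(e)=0$ for every $e\in E$. Let $(\eta_t,\sigma_t)_{t\ge0}$ be a continuous-time Markov jump process on $\{0,1\}^E\times\{-1,1\}^V$ with rates $q$ satisfying $q((\eta,\sigma),(\eta',\sigma'))\ge0$ for $(\eta,\sigma)\ne(\eta',\sigma')$, $\sum_{(\eta',\sigma')}q((\eta,\sigma),(\eta',\sigma'))=0$ for all $(\eta,\sigma)$, and the detailed balance equation $IP(\eta,\sigma)q((\eta,\sigma),(\eta',\sigma'))=IP(\eta',\sigma')q((\eta',\sigma'),(\eta,\sigma))$ for all pairs of states. If the spin marginal $(\sigma_t)_{t\ge0}$ is a Markov jump process with transition rates $c(\sigma,\sigma')$ satisfying $c(\sigma,\sigma')=0$ whenever $\sigma,\sigma'$ differ at two or more vertices, $c(\sigma,\sigma^x)>0$ for all $x\in V$, and $c(\sigma,\sigma)=-\sum_{y\in V}c(\sigma,\sigma^y)$, then the edge marginal $(\eta_t)_{t\ge0}$ is not a Markov jump process.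
   Context: $(V,E)$ is a finite graph with unoriented edges, $E$ a set of pairs of distinct vertices. Edge configurations $\eta\in\{0,1\}^E$, spin configurations $\sigma\in\{-1,1\}^V$. For $e=\langle x,y\rangle$, $\delta_\sigma(e)=\mathbf 1_{\sigma(x)=\sigma(y)}$. $IP(\eta,\sigma)=\frac1Z\prod_{e\in E}\big(p\mathbf 1_{\eta(e)=1}\delta_\sigma(e)+(1-p)\mathbf 1_{\eta(e)=0}\big)$ with $Z$ the normalizing constant. $\sigma^x$ is $\sigma$ with the spin at $x$ flipped. A marginal process is a Markov jump process if it is a time-homogeneous Markov process for every initial distribution, with transition rates not depending on the initial distribution. *)

theory Defs
  imports Complex_Main
begin

definition qmatrix :: "'s set \<Rightarrow> ('s \<Rightarrow> 's \<Rightarrow> real) \<Rightarrow> bool" where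
  "qmatrix S Q \<longleftrightarrow> (\<forall>x\<in>S. \<forall>y\<in>S. x \<noteq> y \<longrightarrow> Q x y \<ge> 0) \<and> (\<forall>x\<in>S. (\<Sum>y\<in>S. Q x y) = 0)"

fun mpow :: "'s set \<Rightarrow> ('s \<Rightarrow> 's \<Rightarrow> real) \<Rightarrow> nat \<Rightarrow> 's \<Rightarrow> 's \<Rightarrow> real" where
  "mpow S Q 0 x y = (if x = y then 1 else 0)"
| "mpow S Q (Suc n) x y = (\<Sum>z\<in>S. mpow S Q n x z * Q z y)"

definition trans_fun :: "'s set \<Rightarrow> ('s \<Rightarrow> 's \<Rightarrow> real) \<Rightarrow> real \<Rightarrow> 's \<Rightarrow> 's \<Rightarrow> real" where
  "trans_fun S Q t x y = (\<Sum>n. t ^ n / fact n * mpow S Q n x y)"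

definition distr_on :: "'s set \<Rightarrow> ('s \<Rightarrow> real) \<Rightarrow> bool" where
  "distr_on S \<mu> \<longleftrightarrow> (\<forall>x\<in>S. \<mu> x \<ge> 0) \<and> (\<Sum>x\<in>S. \<mu> x) = 1"

text \<open>Given the underlying process is at state x, probability that the observed process
  (through f) takes values y_1,...,y_n after successive time increments d_1,...,d_n.\<close>
fun obs_path :: "'s set \<Rightarrow> ('s \<Rightarrow> 's \<Rightarrow> real) \<Rightarrow> ('s \<Rightarrow> 'a) \<Rightarrow> 's \<Rightarrow> (real \<times> 'a) list \<Rightarrow> real" where
  "obs_path S Q f x [] = 1"
| "obs_path S Q f x ((d, y) # rest) =
     (\<Sum>x'\<in>S. if f x' = y then trans_fun S Q d x x' * obs_path S Q f x' rest else 0)"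

text \<open>Finite-dimensional distribution of the marginal f(X_t) of the jump process X with rates Q
  and initial law mu: probability of f(X_0)=y0, f(X_{t_1})=y_1, ..., where t_k - t_{k-1} = d_k.\<close>
definition marginal_fdd :: "'s set \<Rightarrow> ('s \<Rightarrow> 's \<Rightarrow> real) \<Rightarrow> ('s \<Rightarrow> 'a) \<Rightarrow> ('s \<Rightarrow> real)
    \<Rightarrow> 'a \<Rightarrow> (real \<times> 'a) list \<Rightarrow> real" where
  "marginal_fdd S Q f \<mu> y0 steps = (\<Sum>x\<in>S. if f x = y0 then \<mu> x * obs_path S Q f x steps else 0)"

text \<open>The marginal f(X_t) is a Markov jump process on T with transition rates c: for every
  initial distribution, its finite-dimensional distributions are those of the time-homogeneous
  Markov jump process on T with rate matrix c (c not depending on the initial distribution).\<close>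
definition markov_jump_marginal :: "'s set \<Rightarrow> ('s \<Rightarrow> 's \<Rightarrow> real) \<Rightarrow> ('s \<Rightarrow> 'a) \<Rightarrow> 'a set
    \<Rightarrow> ('a \<Rightarrow> 'a \<Rightarrow> real) \<Rightarrow> bool" where
  "markov_jump_marginal S Q f T c \<longleftrightarrow> qmatrix T c \<and>
     (\<forall>\<mu>. distr_on S \<mu> \<longrightarrow> (\<forall>y0\<in>T. \<forall>steps. (\<forall>(d, y)\<in>set steps. d \<ge> 0 \<and> y \<in> T) \<longrightarrow>
        marginal_fdd S Q f \<mu> y0 steps =
          (\<Sum>x\<in>S. if f x = y0 then \<mu> x else 0) * obs_path T c id y0 steps))"

text \<open>Spins are encoded by bool (True = +1, False = -1); edges are 2-element vertex sets.
  Vertex set V = UNIV of a finite type.\<close>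

definition delta :: "('v \<Rightarrow> bool) \<Rightarrow> 'v set \<Rightarrow> bool" where
  "delta \<sigma> e \<longleftrightarrow> (\<forall>x\<in>e. \<forall>y\<in>e. \<sigma> x = \<sigma> y)"

definition edge_configs :: "'v set set \<Rightarrow> ('v set \<Rightarrow> bool) set" where
  "edge_configs E = {\<eta>. \<forall>e. \<eta> e \<longrightarrow> e \<in> E}"

definition ES_weight :: "'v set set \<Rightarrow> real \<Rightarrow> ('v set \<Rightarrow> bool) \<Rightarrow> ('v \<Rightarrow> bool) \<Rightarrow> real" where
  "ES_weight E p \<eta> \<sigma> =
     (\<Prod>e\<in>E. (if \<eta> e \<and> delta \<sigma> e then p else 0) + (if \<not> \<eta> e then 1 - p else 0))"

definition ES_Z :: "'v set set \<Rightarrow> real \<Rightarrow> real" where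
  "ES_Z E p = (\<Sum>\<eta>\<in>edge_configs E. \<Sum>\<sigma>\<in>(UNIV :: ('v \<Rightarrow> bool) set). ES_weight E p \<eta> \<sigma>)"

definition IP :: "'v set set \<Rightarrow> real \<Rightarrow> ('v set \<Rightarrow> bool) \<Rightarrow> ('v \<Rightarrow> bool) \<Rightarrow> real" where
  "IP E p \<eta> \<sigma> = ES_weight E p \<eta> \<sigma> / ES_Z E p"

definition flip :: "('v \<Rightarrow> bool) \<Rightarrow> 'v \<Rightarrow> ('v \<Rightarrow> bool)" where
  "flip \<sigma> x = \<sigma>(x := \<not> \<sigma> x)"

end

theory Submission
  imports Defs
begin

lemma mpow_bound:
  fixes Q :: "'s \<Rightarrow> 's \<Rightarrow> real"
  assumes "finite S" "x \<in> S"
  defines "M \<equiv> (\<Sum>z\<in>S. \<Sum>w\<in>S. \<bar>Q z w\<bar>)"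
  shows "\<forall>y\<in>S. \<bar>mpow S Q n x y\<bar> \<le> M ^ n"
proof (induction n)
  case 0 then show ?case by simp
next
  case (Suc n)
  show ?case
  proof
    fix y assume y: "y \<in> S"
    have "\<bar>mpow S Q (Suc n) x y\<bar> \<le> (\<Sum>z\<in>S. \<bar>mpow S Q n x z * Q z y\<bar>)"
      by (simp add: sum_abs)
    also have "\<dots> \<le> (\<Sum>z\<in>S. M ^ n * \<bar>Q z y\<bar>)"
      by (intro sum_mono) (use Suc in \<open>auto simp: abs_mult intro!: mult_right_mono\<close>)
    also have "\<dots> = M ^ n * (\<Sum>z\<in>S. \<bar>Q z y\<bar>)" by (simp add: sum_distrib_left)
    also have "(\<Sum>z\<in>S. \<bar>Q z y\<bar>) \<le> M"
      unfolding M_def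
      by (intro sum_mono) (use assms y in \<open>auto intro: member_le_sum\<close>)
    then have "M ^ n * (\<Sum>z\<in>S. \<bar>Q z y\<bar>) \<le> M ^ n * M"
      by (intro mult_left_mono) (auto simp: M_def intro!: zero_le_power sum_nonneg)
    finally show "\<bar>mpow S Q (Suc n) x y\<bar> \<le> M ^ Suc n" by (simp add: mult.commute)
  qed
qed

lemma trans_deriv:
  assumes "finite S" "x \<in> S" "y \<in> S"
  shows "((\<lambda>t. trans_fun S Q t x y) has_field_derivative Q x y) (at 0)"
proof -
  define a where "a n = mpow S Q n x y / fact n" for n
  define M where "M = (\<Sum>z\<in>S. \<Sum>w\<in>S. \<bar>Q z w\<bar>)"
  have ext: "(\<lambda>t. trans_fun S Q t x y) = (\<lambda>t. \<Sum>n. a n * t ^ n)"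
    unfolding trans_fun_def a_def by (auto simp: field_simps)
  have sm: "summable (\<lambda>n. a n * 1 ^ n)"
  proof -
    have "summable (\<lambda>n. inverse (fact n) * M ^ n)" by (rule summable_exp)
    moreover have "norm (a n * 1 ^ n) \<le> inverse (fact n) * M ^ n" for n
      using mpow_bound[OF assms(1,2), of Q n] assms(3) unfolding a_def M_def
      by (auto simp: field_simps)
    ultimately show ?thesis by (rule summable_comparison_test'[where N=0])
  qed
  have "((\<lambda>t. \<Sum>n. a n * t ^ n) has_field_derivative (\<Sum>n. diffs a n * 0 ^ n)) (at 0)"
    by (rule termdiffs_strong[OF sm]) simp
  moreover have "(\<Sum>n. diffs a n * 0 ^ n) = Q x y"
  proof -
    have "(\<Sum>n. diffs a n * 0 ^ n) = diffs a 0" by (rule powser_zero)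
    also have "\<dots> = a 1" by (simp add: diffs_def)
    also have "\<dots> = (\<Sum>z\<in>S. (if x = z then 1 else 0) * Q z y)" by (simp add: a_def)
    also have "\<dots> = Q x y" using assms by (simp add: sum.delta if_distrib[of "\<lambda>u. u * _"] cong: if_cong)
    finally show ?thesis .
  qed
  ultimately show ?thesis using ext by simp
qed

lemma deriv_right_unique:
  fixes g h :: "real \<Rightarrow> real"
  assumes "(g has_field_derivative a) (at 0)" "(h has_field_derivative b) (at 0)"
    "\<And>t. t \<ge> 0 \<Longrightarrow> g t = h t"
  shows "a = b"
proof -
  have d: "((\<lambda>t. g t - h t) has_field_derivative (a - b)) (at 0)"
    using assms by (intro DERIV_diff)
  then have "((\<lambda>t. ((g t - h t) - (g 0 - h 0)) / (t - 0)) \<longlongrightarrow> a - b) (at 0)"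
    using has_field_derivative_iff by fastforce
  then have l: "((\<lambda>t. ((g t - h t) - (g 0 - h 0)) / (t - 0)) \<longlongrightarrow> a - b) (at_right 0)"
    by (rule filterlim_mono) (auto simp: at_le)
  have "eventually (\<lambda>t. ((g t - h t) - (g 0 - h 0)) / (t - 0) = 0) (at_right (0::real))"
    using assms(3) eventually_at_right_less[of 0]
    by (auto elim!: eventually_mono)
  then have "((\<lambda>t. ((g t - h t) - (g 0 - h 0)) / (t - 0)) \<longlongrightarrow> 0) (at_right 0)"
    by (rule tendsto_eventually)
  from tendsto_unique[OF _ l this] show ?thesis by simp
qed

lemma lump_eq:
  assumes mj: "markov_jump_marginal S Q f T C" and fin: "finite S" "finite T" and S: "s \<in> S" "f s \<in> T" "y \<in> T" "t \<ge> 0"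
  shows "(\<Sum>x\<in>S. if f x = y then trans_fun S Q t s x else 0) = trans_fun T C t (f s) y"
proof -
  define \<mu> where "\<mu> x = (if x = s then 1 else (0::real))" for x
  have d: "distr_on S \<mu>" using S fin unfolding distr_on_def \<mu>_def by (simp add: sum.delta)
  have "marginal_fdd S Q f \<mu> (f s) [(t, y)] =
          (\<Sum>x\<in>S. if f x = f s then \<mu> x else 0) * obs_path T C id (f s) [(t, y)]"
    using mj d S unfolding markov_jump_marginal_def by auto
  moreover have "marginal_fdd S Q f \<mu> (f s) [(t, y)] = (\<Sum>x\<in>S. if f x = y then trans_fun S Q t s x else 0)"
  proof -
    have "marginal_fdd S Q f \<mu> (f s) [(t, y)] = (\<Sum>x\<in>S. if x = s then obs_path S Q f s [(t, y)] else 0)"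
      unfolding marginal_fdd_def \<mu>_def by (rule sum.cong) auto
    also have "\<dots> = obs_path S Q f s [(t, y)]" using S fin by simp
    finally show ?thesis by (simp only: obs_path.simps mult_1_right)
  qed
  moreover have "(\<Sum>x\<in>S. if f x = f s then \<mu> x else 0) = 1"
    unfolding \<mu>_def using fin S by (subst sum.cong[OF refl, of _ _ "\<lambda>x. if x = s then 1 else 0"]) auto
  moreover have "obs_path T C id (f s) [(t, y)] = trans_fun T C t (f s) y"
    using S fin by (simp add: sum.delta cong: if_cong)
  ultimately show ?thesis by simp
qed

lemma lump_rate:
  assumes mj: "markov_jump_marginal S Q f T C" and fin: "finite S" "finite T"
    and S: "s \<in> S" "f s \<in> T" "y \<in> T"
  shows "(\<Sum>x\<in>S. if f x = y then Q s x else 0) = C (f s) y"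
proof (rule deriv_right_unique)
  have "((\<lambda>t. \<Sum>x\<in>{x\<in>S. f x = y}. trans_fun S Q t s x) has_field_derivative
          (\<Sum>x\<in>{x\<in>S. f x = y}. Q s x)) (at 0)"
    by (rule DERIV_sum) (use fin S in \<open>auto intro: trans_deriv\<close>)
  then show "((\<lambda>t. \<Sum>x\<in>S. if f x = y then trans_fun S Q t s x else 0) has_field_derivative
          (\<Sum>x\<in>S. if f x = y then Q s x else 0)) (at 0)"
    using fin by (simp add: sum.inter_filter)
  show "((\<lambda>t. trans_fun T C t (f s) y) has_field_derivative C (f s) y) (at 0)"
    using fin S by (intro trans_deriv)
  show "\<And>t. 0 \<le> t \<Longrightarrow> (\<Sum>x\<in>S. if f x = y then trans_fun S Q t s x else 0) = trans_fun T C t (f s) y"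
    using lump_eq[OF mj fin S] by blast
qed


lemma card2_other:
  assumes "card e = 2" "x \<in> e"
  shows "\<exists>y. y \<noteq> x \<and> e = {x, y}"
  using assms unfolding card_2_iff by (metis insert_commute insertE singletonD)

lemma delta_pair: "delta \<sigma> {a, b} \<longleftrightarrow> \<sigma> a = \<sigma> b"
  unfolding delta_def by auto

lemma two_le_card:
  assumes "finite A" "a \<in> A" "b \<in> A" "a \<noteq> b"
  shows "2 \<le> card A"
proof -
  have "card {a, b} \<le> card A" using assms by (intro card_mono) auto
  then show ?thesis using assms by simp
qed

lemma weight_nonneg:
  assumes "0 < p" "p < 1"
  shows "0 \<le> ES_weight E p \<eta> \<sigma>"
  unfolding ES_weight_def using assms by (intro prod_nonneg) auto

lemma weight_pos:
  assumes "0 < p" "p < 1" "\<forall>e\<in>E. \<eta> e \<longrightarrow> delta \<sigma> e"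
  shows "0 < ES_weight E p \<eta> \<sigma>"
  unfolding ES_weight_def using assms by (intro prod_pos) auto

lemma weight_zero:
  assumes "finite E" "e \<in> E" "\<eta> e" "\<not> delta \<sigma> e"
  shows "ES_weight E p \<eta> \<sigma> = 0"
  unfolding ES_weight_def using assms by (intro prod_zero) auto

lemma Z_pos:
  fixes E :: "('v::finite) set set"
  assumes "0 < p" "p < 1"
  shows "0 < ES_Z E p"
proof -
  have z: "(\<lambda>_. False) \<in> edge_configs E" unfolding edge_configs_def by simp
  have "0 < ES_weight E p (\<lambda>_. False) (\<lambda>_::'v. True)"
    using assms by (intro weight_pos) auto
  also have "\<dots> \<le> (\<Sum>\<sigma>\<in>(UNIV :: ('v \<Rightarrow> bool) set). ES_weight E p (\<lambda>_. False) \<sigma>)"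
    using assms by (intro member_le_sum weight_nonneg) auto
  also have "\<dots> \<le> ES_Z E p"
    unfolding ES_Z_def using assms z
    by (intro member_le_sum[where f="\<lambda>\<eta>. \<Sum>\<sigma>\<in>(UNIV :: ('v \<Rightarrow> bool) set). ES_weight E p \<eta> \<sigma>"] sum_nonneg weight_nonneg) auto
  finally show ?thesis .
qed

theorem theorem4:
  fixes E :: "('v::finite) set set"
    and p :: real
    and q :: "(('v set \<Rightarrow> bool) \<times> ('v \<Rightarrow> bool)) \<Rightarrow> (('v set \<Rightarrow> bool) \<times> ('v \<Rightarrow> bool)) \<Rightarrow> real"
    and c :: "('v \<Rightarrow> bool) \<Rightarrow> ('v \<Rightarrow> bool) \<Rightarrow> real"
    and xbar :: 'v
    and sigmabar :: "'v \<Rightarrow> bool"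
  defines "S \<equiv> edge_configs E \<times> (UNIV :: ('v \<Rightarrow> bool) set)"
  assumes edges: "\<forall>e\<in>E. card e = 2"
    and p: "0 < p" "p < 1"
    and deg: "card {e\<in>E. xbar \<in> e} \<ge> 4"
    and antiferro: "\<forall>e\<in>E. \<not> delta sigmabar e"
    and q_nonneg: "\<forall>s\<in>S. \<forall>s'\<in>S. s \<noteq> s' \<longrightarrow> q s s' \<ge> 0"
    and q_rows: "\<forall>s\<in>S. (\<Sum>s'\<in>S. q s s') = 0"
    and detailed_balance: "\<forall>(\<eta>, \<sigma>)\<in>S. \<forall>(\<eta>', \<sigma>')\<in>S.
        IP E p \<eta> \<sigma> * q (\<eta>, \<sigma>) (\<eta>', \<sigma>') = IP E p \<eta>' \<sigma>' * q (\<eta>', \<sigma>') (\<eta>, \<sigma>)"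
    and spin_markov: "markov_jump_marginal S q snd UNIV c"
    and c_local: "\<forall>\<sigma> \<sigma>'. card {x. \<sigma> x \<noteq> \<sigma>' x} \<ge> 2 \<longrightarrow> c \<sigma> \<sigma>' = 0"
    and c_pos: "\<forall>\<sigma> x. c \<sigma> (flip \<sigma> x) > 0"
    and c_diag: "\<forall>\<sigma>. c \<sigma> \<sigma> = - (\<Sum>y\<in>UNIV. c \<sigma> (flip \<sigma> y))"
  shows "\<not> (\<exists>r. markov_jump_marginal S q fst (edge_configs E) r)"
proof
  assume "\<exists>r. markov_jump_marginal S q fst (edge_configs E) r"
  then obtain r where em: "markov_jump_marginal S q fst (edge_configs E) r" by blast
  define EC where "EC = edge_configs E"
  have finS: "finite S" "finite EC" "finite E" by simp_all
  have finU: "finite (UNIV :: ('v \<Rightarrow> bool) set)" by simp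
  have inS: "(\<eta>, \<sigma>) \<in> S \<longleftrightarrow> \<eta> \<in> EC" for \<eta> \<sigma> unfolding S_def EC_def by simp
  have sl: "(\<Sum>x\<in>S. if snd x = \<sigma>' then q s x else 0) = c (snd s) \<sigma>'" if "s \<in> S" for s \<sigma>'
    using lump_rate[OF spin_markov finS(1) finU] that by simp
  have el: "(\<Sum>x\<in>S. if fst x = \<eta>' then q s x else 0) = r (fst s) \<eta>'" if "s \<in> S" "\<eta>' \<in> EC" for s \<eta>'
    using lump_rate[OF em finS(1)] that finS(2) unfolding EC_def S_def by auto
  have db: "IP E p \<eta> \<sigma> * q (\<eta>, \<sigma>) (\<eta>', \<sigma>') = IP E p \<eta>' \<sigma>' * q (\<eta>', \<sigma>') (\<eta>, \<sigma>)"
    if "\<eta> \<in> EC" "\<eta>' \<in> EC" for \<eta> \<sigma> \<eta>' \<sigma>'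
    using detailed_balance that unfolding S_def EC_def by fastforce
  have qn: "q s s' \<ge> 0" if "s \<in> S" "s' \<in> S" "s \<noteq> s'" for s s'
    using q_nonneg that by blast
  have Zp: "0 < ES_Z E p" using Z_pos p by blast
  have IPpos: "0 < IP E p \<eta> \<sigma>" if "\<forall>e\<in>E. \<eta> e \<longrightarrow> delta \<sigma> e" for \<eta> \<sigma>
    unfolding IP_def using weight_pos[OF p that] Zp by simp
  have IPzero: "IP E p \<eta> \<sigma> = 0" if "e \<in> E" "\<eta> e" "\<not> delta \<sigma> e" for \<eta> \<sigma> e
    unfolding IP_def using weight_zero[of E e \<eta> \<sigma> p] finS(3) that by simp
  have noflow: "q (\<eta>, \<sigma>) (\<eta>', \<sigma>') = 0"
    if "\<eta> \<in> EC" "\<eta>' \<in> EC" "\<forall>e\<in>E. \<eta> e \<longrightarrow> delta \<sigma> e" "e \<in> E" "\<eta>' e" "\<not> delta \<sigma>' e"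
    for \<eta> \<sigma> \<eta>' \<sigma>' e
  proof -
    have "IP E p \<eta> \<sigma> * q (\<eta>, \<sigma>) (\<eta>', \<sigma>') = 0"
      using db[OF that(1,2), of \<sigma> \<sigma>'] IPzero[of e \<eta>' \<sigma>'] that(4-6) by simp
    then show ?thesis using IPpos[OF that(3)] by simp
  qed
  have "3 \<le> card {e\<in>E. xbar \<in> e}" using deg by simp
  then obtain B3 where B3: "B3 \<subseteq> {e\<in>E. xbar \<in> e}" "card B3 = 3"
    by (meson obtain_subset_with_card_n)
  then obtain e1 e2 e3 where e123: "B3 = {e1, e2, e3}" "e1 \<noteq> e2" "e2 \<noteq> e3" "e1 \<noteq> e3"
    unfolding card_3_iff by blast
  have eE: "e1 \<in> E" "e2 \<in> E" "e3 \<in> E" "xbar \<in> e1" "xbar \<in> e2" "xbar \<in> e3"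
    using B3(1) e123 by auto
  obtain y1 where y1: "y1 \<noteq> xbar" "e1 = {xbar, y1}" using card2_other edges eE by metis
  obtain y2 where y2: "y2 \<noteq> xbar" "e2 = {xbar, y2}" using card2_other edges eE by metis
  obtain y3 where y3: "y3 \<noteq> xbar" "e3 = {xbar, y3}" using card2_other edges eE by metis
  have ydist: "y1 \<noteq> y2" "y2 \<noteq> y3" "y1 \<noteq> y3" using y1 y2 y3 e123 by auto
  define Z0 where "Z0 = (\<lambda>_::'v set. False)"
  define B where "B = (\<lambda>e. e = e1 \<or> e = e2 \<or> e = e3)"
  have Z0EC: "Z0 \<in> EC" unfolding Z0_def EC_def edge_configs_def by simp
  have BEC: "B \<in> EC" unfolding B_def EC_def edge_configs_def using eE by auto
  have BZ: "B \<noteq> Z0" unfolding B_def Z0_def by metis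
  have Z0ok: "\<forall>e\<in>E. Z0 e \<longrightarrow> delta \<sigma> e" for \<sigma> unfolding Z0_def by simp
  define \<sigma>s where "\<sigma>s = (\<lambda>v. v = y1 \<or> v = y2)"
  have q0: "q (Z0, \<sigma>s) (B, \<sigma>) = 0" for \<sigma>
  proof (cases "delta \<sigma> e1 \<and> delta \<sigma> e2 \<and> delta \<sigma> e3")
    case False
    then obtain e where "e \<in> E" "B e" "\<not> delta \<sigma> e" using eE unfolding B_def by blast
    then show ?thesis using noflow[OF Z0EC BEC Z0ok] by blast
  next
    case True
    then have ag: "\<sigma> y1 = \<sigma> xbar" "\<sigma> y2 = \<sigma> xbar" "\<sigma> y3 = \<sigma> xbar"
      using y1 y2 y3 by (auto simp: delta_pair)
    have "2 \<le> card {x. \<sigma>s x \<noteq> \<sigma> x}"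
    proof (cases "\<sigma> xbar")
      case True
      then show ?thesis using ag ydist y1 y2 y3
        by (intro two_le_card[of _ xbar y3]) (auto simp: \<sigma>s_def)
    next
      case False
      then show ?thesis using ag ydist y1 y2 y3
        by (intro two_le_card[of _ y1 y2]) (auto simp: \<sigma>s_def)
    qed
    then have c0: "c \<sigma>s \<sigma> = 0" using c_local by blast
    have neq: "\<sigma> \<noteq> \<sigma>s" using \<open>2 \<le> card {x. \<sigma>s x \<noteq> \<sigma> x}\<close> by auto
    have s0: "(\<Sum>x\<in>S. if snd x = \<sigma> then q (Z0, \<sigma>s) x else 0) = 0"
      using sl[of "(Z0, \<sigma>s)" \<sigma>] c0 Z0EC inS by simp
    have "\<forall>x\<in>S. (if snd x = \<sigma> then q (Z0, \<sigma>s) x else 0) = 0"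
      by (rule iffD1[OF sum_nonneg_eq_0_iff[OF finS(1)] s0])
         (use qn Z0EC inS neq in \<open>auto\<close>)
    then have "(if snd (B, \<sigma>) = \<sigma> then q (Z0, \<sigma>s) (B, \<sigma>) else 0) = 0"
      using BEC inS by blast
    then show ?thesis by simp
  qed
  have r0: "r Z0 B = 0"
  proof -
    have "r Z0 B = (\<Sum>x\<in>S. if fst x = B then q (Z0, \<sigma>s) x else 0)"
      using el[of "(Z0, \<sigma>s)" B] Z0EC BEC inS by simp
    also have "\<dots> = 0" using q0 by (intro sum.neutral) auto
    finally show ?thesis .
  qed
  define \<sigma>b where "\<sigma>b = flip sigmabar xbar"
  have flipback: "flip \<sigma>b xbar = sigmabar" unfolding \<sigma>b_def flip_def by auto
  have Bok: "\<forall>e\<in>E. B e \<longrightarrow> delta \<sigma>b e"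
  proof (intro ballI impI)
    fix e assume "e \<in> E" "B e"
    then have "e = e1 \<or> e = e2 \<or> e = e3" unfolding B_def by blast
    then show "delta \<sigma>b e"
      using antiferro eE y1 y2 y3 unfolding \<sigma>b_def flip_def by (auto simp: delta_pair)
  qed
  have cpos: "c \<sigma>b sigmabar > 0" using c_pos flipback by metis
  have "(\<Sum>x\<in>S. if snd x = sigmabar then q (B, \<sigma>b) x else 0) = c \<sigma>b sigmabar"
    using sl[of "(B, \<sigma>b)" sigmabar] BEC inS by simp
  moreover have "(\<Sum>x\<in>S. if snd x = sigmabar then q (B, \<sigma>b) x else 0)
      = (\<Sum>x\<in>S. if x = (Z0, sigmabar) then q (B, \<sigma>b) x else 0)"
  proof (rule sum.cong[OF refl])
    fix x assume xS: "x \<in> S"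
    obtain \<eta>' \<sigma>' where x: "x = (\<eta>', \<sigma>')" by (cases x)
    have "q (B, \<sigma>b) (\<eta>', sigmabar) = 0" if nz: "\<eta>' \<noteq> Z0"
    proof -
      obtain e where "\<eta>' e" using nz unfolding Z0_def by (metis ext)
      moreover have "e \<in> E" using xS x \<open>\<eta>' e\<close> inS unfolding EC_def edge_configs_def by auto
      ultimately show ?thesis using noflow[OF BEC _ Bok, of \<eta>' e sigmabar] antiferro xS x inS by auto
    qed
    then show "(if snd x = sigmabar then q (B, \<sigma>b) x else 0) = (if x = (Z0, sigmabar) then q (B, \<sigma>b) x else 0)"
      using x by auto
  qed
  moreover have "(\<Sum>x\<in>S. if x = (Z0, sigmabar) then q (B, \<sigma>b) x else 0) = q (B, \<sigma>b) (Z0, sigmabar)"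
    using Z0EC inS finS by (simp add: sum.delta')
  ultimately have qpos: "q (B, \<sigma>b) (Z0, sigmabar) > 0" using cpos by simp
  have "IP E p Z0 sigmabar * q (Z0, sigmabar) (B, \<sigma>b) = IP E p B \<sigma>b * q (B, \<sigma>b) (Z0, sigmabar)"
    using db[OF Z0EC BEC] by blast
  also have "\<dots> > 0" using IPpos[OF Bok] qpos by simp
  finally have qpos2: "q (Z0, sigmabar) (B, \<sigma>b) > 0"
    using IPpos[OF Z0ok, of sigmabar] by (simp add: zero_less_mult_iff)
  have "r Z0 B = (\<Sum>x\<in>S. if fst x = B then q (Z0, sigmabar) x else 0)"
    using el[of "(Z0, sigmabar)" B] Z0EC BEC inS by simp
  also have "\<dots> \<ge> (if fst (B, \<sigma>b) = B then q (Z0, sigmabar) (B, \<sigma>b) else 0)"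
    by (rule member_le_sum) (use BEC inS qn Z0EC BZ finS in \<open>auto\<close>)
  finally show False using r0 qpos2 by simp
qed

end
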